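(* Let $m$ be a positive integer and let $0\le a<m$ be an integer that is a sum of $3$ squares modulo $m$ (i.e. $z_1^2+z_2^2+z_3^2\equiv a\pmod m$ for some integers $z_i$). Then there exists a square-free integer $a'\in[1,5m]$ such that $a'$ is a sum of $3$ squares modulo $m$ and such that the following implication holds: if there exist a constant $c>0$ and infinitely many positive integers $n'\equiv a' \pmod m$ with $r_3(n')\ge c\sqrt{n'}\log\log n'$, then there exist a constant $c'>0$ depending only on $c$ and $m$ and infinitely many positive integers $n\equiv a\pmod m$ with $r_3(n)\ge c'\sqrt{n}\log\log n$.
   Context: For a positive integer $n$, $r_3(n) := |\{(x,y,z)\in\mathbb{Z}^3 : x^2+y^2+z^2=n\}|$. *)

theory Defs
  imports Complex_Main "HOL-Number_Theory.Cong" "HOL-Computational_Algebra.Squarefree"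
begin

definition r3 :: "nat \<Rightarrow> nat" where
  "r3 n = card {p :: int \<times> int \<times> int. (fst p)^2 + (fst (snd p))^2 + (snd (snd p))^2 = int n}"

definition sum3sq_mod :: "int \<Rightarrow> int \<Rightarrow> bool" where
  "sum3sq_mod m a \<longleftrightarrow> (\<exists>z1 z2 z3 :: int. [z1^2 + z2^2 + z3^2 = a] (mod m))"

definition many_large :: "int \<Rightarrow> int \<Rightarrow> real \<Rightarrow> bool" where
  "many_large m a c \<longleftrightarrow>
     infinite {n :: nat. n > 0 \<and> [int n = a] (mod m) \<and>
                 real (r3 n) \<ge> c * sqrt (real n) * ln (ln (real n))}"

end

theory Submission
  imports Defs
begin

lemma sq_mod8: "(x::int)^2 mod 8 \<in> {0,1,4}"
proof -
  have "x^2 mod 8 = ((x mod 8)^2) mod 8" by (simp add: power_mod)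
  moreover have "x mod 8 \<in> {0,1,2,3,4,5,6,7}" by auto
  ultimately show ?thesis by auto
qed

lemma sq_mod4: "(x::int)^2 mod 4 = (if even x then 0 else 1)"
proof -
  have "x^2 mod 4 = ((x mod 4)^2) mod 4" by (simp add: power_mod)
  moreover have "x mod 4 \<in> {0,1,2,3}" by auto
  moreover have "even x \<longleftrightarrow> even (x mod 4)" by (simp add: even_mod_4_div_2 dvd_mod_iff)
  ultimately show ?thesis by auto
qed

lemma mod3: "(a mod m + b mod m + c mod m) mod m = (a+b+c) mod (m::int)"
  by (metis mod_add_left_eq mod_add_right_eq)

lemma EL:
  fixes N X Y Z M l :: int
  shows "[N = X^2+Y^2+Z^2] (mod M) \<Longrightarrow> (4::int)^i*8 dvd M \<Longrightarrow> N \<noteq> 4^i*(8*l+7)"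
proof (induction i arbitrary: N X Y Z M)
  case 0
  then have "[N = X^2+Y^2+Z^2] (mod 8)" using cong_dvd_modulus by auto
  then have "N mod 8 = (X^2 mod 8 + Y^2 mod 8 + Z^2 mod 8) mod 8"
    unfolding cong_def by (simp add: mod3)
  moreover note sq_mod8[of X] sq_mod8[of Y] sq_mod8[of Z]
  ultimately have "N mod 8 \<noteq> 7" by auto
  then show ?case by auto
next
  case (Suc i)
  show ?case
  proof
    assume N: "N = 4 ^ Suc i * (8 * l + 7)"
    obtain q where q: "M = 4^i*8*q*4" using Suc.prems(2) by (auto simp: dvd_def)
    have "[N = X^2+Y^2+Z^2] (mod 4)" using Suc.prems(1) q
      by (metis cong_dvd_modulus dvd_triv_right)
    moreover have "N mod 4 = 0" using N by simp
    moreover have "(X^2 mod 4 + Y^2 mod 4 + Z^2 mod 4) mod 4 = (X^2+Y^2+Z^2) mod 4"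
      by (rule mod3)
    ultimately have "(X^2 mod 4 + Y^2 mod 4 + Z^2 mod 4) mod 4 = 0"
      by (simp add: cong_def)
    then have "even X \<and> even Y \<and> even Z" unfolding sq_mod4
      by (cases "even X"; cases "even Y"; cases "even Z"; simp)
    then obtain X' Y' Z' where XYZ: "X = 2*X'" "Y = 2*Y'" "Z = 2*Z'" by (auto elim!: evenE)
    have "M dvd N - (X^2+Y^2+Z^2)" using Suc.prems(1) by (simp add: cong_iff_dvd_diff)
    also have "N - (X^2+Y^2+Z^2) = 4 * (4^i*(8*l+7) - (X'^2+Y'^2+Z'^2))"
      using N XYZ by (simp add: power2_eq_square algebra_simps)
    finally have h4: "(4^i*8*q)*4 dvd (4^i*(8*l+7) - (X'^2+Y'^2+Z'^2))*4" using q
      by (simp add: mult.commute)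
    then have "4^i*8*q dvd 4^i*(8*l+7) - (X'^2+Y'^2+Z'^2)"
      using dvd_times_right_cancel_iff[of "4::int" "4^i*8*q"] h4 by (metis zero_neq_numeral)
    then have "[4^i*(8*l+7) = X'^2+Y'^2+Z'^2] (mod 4^i*8*q)" by (simp add: cong_iff_dvd_diff)
    from Suc.IH[OF this] show False by simp
  qed
qed
lemma pow2_odd_unique_aux:
  fixes u w :: int
  assumes "2^e * u = 2^f * w" "odd u" "e \<le> f"
  shows "e = f \<and> u = w"
proof -
  have "(2::int)^f = 2^e * 2^(f-e)" using assms(3) by (simp add: power_add[symmetric])
  then have "2^e * u = 2^e * (2^(f-e) * w)" using assms(1) by simp
  then have u: "u = 2^(f-e) * w" by simp
  have "f - e = 0"
  proof (rule ccontr)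
    assume "f - e \<noteq> 0"
    then have "even ((2::int)^(f-e))" by simp
    then show False using u assms(2) by auto
  qed
  then show ?thesis using u assms(3) by simp
qed

lemma pow2_odd_unique:
  fixes u w :: int
  assumes "2^e * u = 2^f * w" "odd u" "odd w"
  shows "e = f \<and> u = w"
  using pow2_odd_unique_aux[of e u f w] pow2_odd_unique_aux[of f w e u] assms
  by (cases "e \<le> f") auto

lemma decomp2: "(m::int) > 0 \<Longrightarrow> \<exists>e q. m = 2^e * q \<and> odd q"
proof (induction "nat m" arbitrary: m rule: less_induct)
  case less
  show ?case
  proof (cases "even m")
    case True
    then obtain m' where m': "m = 2*m'" by (auto elim!: evenE)
    then have "m' > 0" "nat m' < nat m" using less.prems by auto
    from less.hyps[OF this(2) this(1)] obtain e q where "m' = 2^e*q" "odd q" by auto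
    then show ?thesis using m' by (intro exI[of _ "Suc e"] exI[of _ q]) auto
  next
    case False
    then show ?thesis by (intro exI[of _ 0] exI[of _ m]) auto
  qed
qed

lemma bad_sqf:
  fixes s :: int
  assumes "s mod 8 = 7"
  shows "k \<ge> 1 \<Longrightarrow> \<exists>i l. k^2 * s = 4^i * (8*l+7)"
proof (induction "nat k" arbitrary: k rule: less_induct)
  case less
  show ?case
  proof (cases "even k")
    case True
    then obtain k' where k': "k = 2*k'" by (auto elim!: evenE)
    then have "k' \<ge> 1" "nat k' < nat k" using less.prems by auto
    from less.hyps[OF this(2) this(1)] obtain i l where "k'^2*s = 4^i*(8*l+7)" by auto
    then have "k^2*s = 4^(Suc i)*(8*l+7)" using k' by (simp add: power2_eq_square algebra_simps)
    then show ?thesis by blast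
  next
    case False
    then obtain j where j: "k = 2*j+1" by (auto elim!: oddE)
    obtain q where q: "s = 8*q+7" using assms by (metis div_mod_decomp_int mult.commute)
    have "even (j*j+j)" by simp
    then obtain r where r: "j*j+j = 2*r" by (metis dvdE)
    have "k^2 = 8*r+1" using j r by (simp add: power2_eq_square algebra_simps)
    then have "k^2*s = 4^0*(8*(r*(8*q+7)+q)+7)" using q by (simp add: algebra_simps)
    then show ?thesis by blast
  qed
qed
lemma good_exists:
  fixes m a :: int
  assumes m: "m > 0" and a: "0 \<le> a" "a < m" and S: "sum3sq_mod m a"
  shows "\<exists>N. N \<ge> 1 \<and> N < 4*m \<and> [N = a] (mod m) \<and> (\<forall>i l. N \<noteq> 4^i*(8*l+7))"
proof -
  obtain e q where mq: "m = 2^e*q" and q: "odd q" using decomp2[OF m] by auto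
  have qpos: "q > 0" using m mq by (simp add: zero_less_mult_iff)
  show ?thesis
  proof (cases "2^e dvd a")
    case True
    then obtain b where b: "a = 2^e*b" by (auto elim!: dvdE)
    have b0: "b \<ge> 0" using a b by (simp add: zero_le_mult_iff)
    define t where "t = ((1-b)*q) mod 4"
    have t: "0 \<le> t" "t \<le> 3" unfolding t_def by auto
    obtain j where j: "q = 2*j+1" using q by (auto elim!: oddE)
    have "even (j*j+j)" by simp
    then obtain r where r: "j*j+j = 2*r" by (metis dvdE)
    have q2: "q*q = 4*(2*r)+1" using j r by (simp add: algebra_simps)
    obtain z where z: "(1-b)*q = 4*z + t" unfolding t_def by (metis div_mod_decomp_int mult.commute)
    define u where "u = b + t*q"
    have "u*1 = b + ((1-b)*q - 4*z)*q" unfolding u_def using z by simp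
    also have "\<dots> = b + (1-b)*(q*q) - 4*z*q" by (simp add: algebra_simps)
    also have "\<dots> = 4*((1-b)*(2*r) - z*q) + 1" unfolding q2 by (simp add: algebra_simps)
    finally have u4: "u = 4*((1-b)*(2*r) - z*q) + 1" by simp
    have u0: "u \<ge> 0" unfolding u_def using b0 t qpos by simp
    have u1: "u \<ge> 1"
    proof -
      define v where "v = (1-b)*(2*r) - z*q"
      have "u = 4*v+1" using u4 v_def by simp
      then show ?thesis using u0 by presburger
    qed
    define N where "N = a + t*m"
    have N: "N = 2^e*u" unfolding N_def u_def b mq by (simp add: algebra_simps)
    have "(2::int)^e \<ge> 1" by simp
    have "2^e * 1 \<le> (2::int)^e * u" using u1 by (intro mult_left_mono) auto
    then have "N \<ge> 1" using N \<open>(2::int)^e \<ge> 1\<close> by linarith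
    moreover have "t*m \<le> 3*m" using t m by (intro mult_right_mono) auto
    then have "N < 4*m" unfolding N_def using a by linarith
    moreover have "[N = a] (mod m)" unfolding N_def by (simp add: cong_iff_dvd_diff)
    moreover have "\<forall>i l. N \<noteq> 4^i*(8*l+7)"
    proof (intro allI notI)
      fix i l assume "N = 4^i*(8*l+7)"
      then have "2^e*u = 2^(2*i)*(8*l+7)" using N by (simp add: power_mult)
      moreover have "odd u" using u4 by simp
      moreover have "odd (8*l+7)" by simp
      ultimately have "u = 8*l+7" using pow2_odd_unique by blast
      then show False using u4 by presburger
    qed
    ultimately show ?thesis by blast
  next
    case False
    show ?thesis
    proof (cases "\<forall>i l. a \<noteq> 4^i*(8*l+7)")
      case True
      moreover have "a \<noteq> 0" using False by auto
      ultimately show ?thesis using a by (intro exI[of _ a]) auto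
    next
      case bad: False
      then obtain i l where il: "a = 4^i*(8*l+7)" by auto
      obtain X Y Z where XYZ: "[X^2+Y^2+Z^2 = a] (mod m)" using S unfolding sum3sq_mod_def by auto
      have nd: "\<not> (4::int)^i*8 dvd m" using EL[OF cong_sym[OF XYZ]] il by blast
      have a2: "a = 2^(2*i)*(8*l+7)" using il by (simp add: power_mult)
      have e1: "2*i < e"
      proof (rule ccontr)
        assume "\<not> 2*i < e"
        then have "(2::int)^e dvd 2^(2*i)" by (simp add: le_imp_power_dvd)
        then have "2^e dvd a" using a2 by simp
        then show False using False by simp
      qed
      have e2: "e < 2*i+3"
      proof (rule ccontr)
        assume "\<not> e < 2*i+3"
        then have "(2::int)^(2*i+3) dvd 2^e" by (simp add: le_imp_power_dvd)
        then have "(2::int)^(2*i+3) dvd m" using mq by simp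
        moreover have "(2::int)^(2*i+3) = 4^i*8" by (simp add: power_add power_mult)
        ultimately show False using nd by simp
      qed
      define d where "d = e - 2*i"
      have d: "d = 1 \<or> d = 2" using e1 e2 unfolding d_def by auto
      have ed: "e = 2*i + d" using e1 unfolding d_def by simp
      define w where "w = 8*l+7+2^d*q"
      have Nw: "a + m = 2^(2*i)*w" unfolding w_def a2 mq ed by (simp add: power_add algebra_simps)
      have wodd: "odd w" using d q unfolding w_def by auto
      have "a + m \<ge> 1" using a m by simp
      moreover have "a + m < 4*m" using a m by simp
      moreover have "[a + m = a] (mod m)" by (simp add: cong_iff_dvd_diff)
      moreover have "\<forall>i l. a + m \<noteq> 4^i*(8*l+7)"
      proof (intro allI notI)
        fix i' l' assume "a + m = 4^i'*(8*l'+7)"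
        then have "2^(2*i)*w = 2^(2*i')*(8*l'+7)" using Nw by (simp add: power_mult)
        moreover have "odd (8*l'+7)" by simp
        ultimately have "w = 8*l'+7" using pow2_odd_unique wodd by blast
        then have "2^d*q = 8*(l'-l)" unfolding w_def by simp
        then show False using d q
        proof (elim disjE)
          assume "2^d*q = 8*(l'-l)" "d = 1" "odd q"
          then have "q = 2*(2*(l'-l))" by simp
          then show False using \<open>odd q\<close> by simp
        next
          assume "2^d*q = 8*(l'-l)" "d = 2" "odd q"
          then have "q = 2*(l'-l)" by simp
          then show False using \<open>odd q\<close> by simp
        qed
      qed
      ultimately show ?thesis by blast
    qed
  qed
qed
lemma sq_lift2:
  fixes r :: int
  assumes "r mod 8 = 1"
  shows "\<exists>x. odd x \<and> [x^2 = r] (mod 2^e)"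
proof (induction e)
  case 0
  show ?case by (intro exI[of _ 1]) simp
next
  case (Suc e)
  show ?case
  proof (cases "e < 3")
    case True
    have "(2::int)^Suc e dvd 2^3" using True by (intro le_imp_power_dvd) simp
    moreover have "[1 = r] (mod 8)" using assms by (simp add: cong_def)
    ultimately have "[1^2 = r] (mod 2^Suc e)" using cong_dvd_modulus by auto
    then show ?thesis by (intro exI[of _ 1]) simp
  next
    case False
    from Suc.IH obtain x where x: "odd x" "[x^2 = r] (mod 2^e)" by auto
    then obtain c where c: "x^2 - r = 2^e*c" by (auto simp: cong_iff_dvd_diff elim!: dvdE)
    show ?thesis
    proof (cases "even c")
      case True
      then obtain c' where "c = 2*c'" by (auto elim!: evenE)
      then have "x^2 - r = 2^Suc e * c'" using c by simp
      then show ?thesis using x(1) by (intro exI[of _ x]) (simp add: cong_iff_dvd_diff)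
    next
      case False
      obtain f where f: "e = f + 3" using \<open>\<not> e < 3\<close> by (metis add.commute le_Suc_ex not_less)
      define y where "y = x + 2^(f+2)"
      have "y^2 - r = (x^2 - r) + 2^(f+3)*x + 2^(f+4)*2^f"
        unfolding y_def by (simp add: power2_eq_square algebra_simps power_add)
      also have "\<dots> = 2^e*(c + x) + 2^(e+1)*2^(e-3)" using c f by (simp add: algebra_simps)
      finally have yy: "y^2 - r = 2^e*(c + x) + 2^(e+1)*2^(e-3)" .
      have "even (c + x)" using False x(1) by simp
      then obtain g where "c + x = 2*g" by (metis dvdE)
      then have "y^2 - r = 2^Suc e * (g + 2^(e-3))" using yy by (simp add: algebra_simps)
      moreover have "odd y" unfolding y_def using x(1) by simp
      ultimately show ?thesis by (intro exI[of _ y]) (simp add: cong_iff_dvd_diff)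
    qed
  qed
qed

lemma sum3_pow2:
  fixes s :: int
  assumes "s mod 4 \<noteq> 0" "s mod 8 \<noteq> 7"
  shows "sum3sq_mod (2^e) s"
proof -
  have "s mod 8 = 1 \<or> s mod 8 = 2 \<or> s mod 8 = 3 \<or> s mod 8 = 5 \<or> s mod 8 = 6"
    using assms by presburger
  then have "\<exists>a b::int. (s - a^2 - b^2) mod 8 = 1"
  proof (elim disjE)
    assume "s mod 8 = 1" then have "(s - 0^2 - 0^2) mod 8 = 1" by simp
    then show ?thesis by blast
  next
    assume "s mod 8 = 2" then have "(s - 1^2 - 0^2) mod 8 = 1" by simp presburger
    then show ?thesis by blast
  next
    assume "s mod 8 = 3" then have "(s - 1^2 - 1^2) mod 8 = 1" by simp presburger
    then show ?thesis by blast
  next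
    assume "s mod 8 = 5" then have "(s - 2^2 - 0^2) mod 8 = 1" by simp presburger
    then show ?thesis by blast
  next
    assume "s mod 8 = 6" then have "(s - 2^2 - 1^2) mod 8 = 1" by simp presburger
    then show ?thesis by blast
  qed
  then obtain a b :: int where ab: "(s - a^2 - b^2) mod 8 = 1" by blast
  from sq_lift2[OF ab] obtain x where "[x^2 = s - a^2 - b^2] (mod 2^e)" by blast
  then have "[x^2 + a^2 + b^2 = s] (mod 2^e)" by (simp add: cong_iff_dvd_diff algebra_simps)
  then show ?thesis unfolding sum3sq_mod_def by blast
qed


lemma sq_inj_half:
  fixes p x1 x2 :: int
  assumes p: "prime p" and x1: "0 \<le> x1" "2*x1 < p" and x2: "0 \<le> x2" "2*x2 < p"
    and eq: "p dvd x1^2 - x2^2"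
  shows "x1 = x2"
proof -
  have "x1^2 - x2^2 = (x1-x2)*(x1+x2)" by (simp add: power2_eq_square algebra_simps)
  then have "p dvd x1 - x2 \<or> p dvd x1 + x2" using eq p prime_dvd_mult_int by metis
  then show ?thesis
  proof
    assume h: "p dvd x1 - x2"
    show ?thesis
    proof (rule ccontr)
      assume "x1 \<noteq> x2"
      then have "\<bar>p\<bar> \<le> \<bar>x1 - x2\<bar>" using dvd_imp_le_int h by simp
      then show False using x1 x2 by linarith
    qed
  next
    assume h: "p dvd x1 + x2"
    show ?thesis
    proof (rule ccontr)
      assume "x1 \<noteq> x2"
      then have "x1 + x2 \<noteq> 0" using x1 x2 by linarith
      then have "\<bar>p\<bar> \<le> \<bar>x1 + x2\<bar>" using dvd_imp_le_int h by simp
      then show False using x1 x2 by linarith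
    qed
  qed
qed

lemma prime_two_sq:
  fixes p :: int
  assumes p: "prime p" "odd p"
  shows "\<exists>c d. p dvd c^2 + d^2 + 1"
proof (rule ccontr)
  assume nex: "\<not> ?thesis"
  have p0: "p > 0" using p prime_gt_0_int by blast
  define H where "H = (p - 1) div 2"
  have H: "2*H + 1 = p" using p(2) unfolding H_def by presburger
  define A where "A = (\<lambda>x. x^2 mod p) ` {0..H}"
  define B where "B = (\<lambda>y. (-1-y^2) mod p) ` {0..H}"
  have injA: "inj_on (\<lambda>x. x^2 mod p) {0..H}"
  proof (rule inj_onI)
    fix x y assume "x \<in> {0..H}" "y \<in> {0..H}" "x^2 mod p = y^2 mod p"
    then show "x = y" using sq_inj_half[OF p(1), of x y] H
      by (auto simp: mod_eq_dvd_iff)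
  qed
  have injB: "inj_on (\<lambda>y. (-1-y^2) mod p) {0..H}"
  proof (rule inj_onI)
    fix x y assume "x \<in> {0..H}" "y \<in> {0..H}" "(-1-x^2) mod p = (-1-y^2) mod p"
    then have "p dvd (-1-x^2) - (-1-y^2)" by (simp add: mod_eq_dvd_iff)
    then have "p dvd y^2 - x^2" by simp
    then show "x = y" using sq_inj_half[OF p(1), of y x] H \<open>x \<in> {0..H}\<close> \<open>y \<in> {0..H}\<close>
      by auto
  qed
  have cA: "card A = nat (H+1)" unfolding A_def using card_image[OF injA] by simp
  have cB: "card B = nat (H+1)" unfolding B_def using card_image[OF injB] by simp
  have sub: "A \<union> B \<subseteq> {0..<p}" unfolding A_def B_def using p0 by auto
  have disj: "A \<inter> B = {}"
  proof (rule ccontr)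
    assume "A \<inter> B \<noteq> {}"
    then obtain x y where "x^2 mod p = (-1-y^2) mod p" unfolding A_def B_def by auto
    then have "p dvd x^2 - (-1-y^2)" by (simp add: mod_eq_dvd_iff)
    then have "p dvd x^2 + y^2 + 1" by (simp add: algebra_simps)
    then show False using nex by blast
  qed
  have "card (A \<union> B) = card A + card B" using disj
    by (intro card_Un_disjoint) (auto simp: A_def B_def)
  also have "\<dots> = nat p + 1"
  proof -
    have "H \<ge> 0" using p0 H by linarith
    then show ?thesis using cA cB H by (simp add: nat_add_distrib[symmetric])
  qed
  finally have "card (A \<union> B) = nat p + 1" .
  moreover have "card (A \<union> B) \<le> card {0..<p}" using sub by (intro card_mono) auto
  ultimately show False by simp
qed

lemma odd_two_sq:
  fixes n :: int
  shows "n \<ge> 1 \<Longrightarrow> odd n \<Longrightarrow> \<exists>c d. n dvd c^2 + d^2 + 1"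
proof (induction "nat n" arbitrary: n rule: less_induct)
  case less
  show ?case
  proof (cases "n = 1")
    case True then show ?thesis by auto
  next
    case False
    then have "\<not> is_unit n" using less.prems by auto
    moreover have "n \<noteq> 0" using less.prems by simp
    ultimately obtain p where pn: "p dvd n" and p: "prime p" using prime_divisor_exists[of n] by blast
    then obtain n' where n': "n = p*n'" by (auto elim!: dvdE)
    have p0: "p > 1" using p prime_gt_1_int by blast
    have "0 < n'" using zero_less_mult_pos[of p n'] n' less.prems p0 by simp
    then have n'1: "n' \<ge> 1" by simp
    have "2*n' \<le> p*n'" using p0 n'1 by (intro mult_right_mono) auto
    then have "n' < n" using n' n'1 by linarith
    then have lt: "nat n' < nat n" using n'1 by simp
    have oddp: "odd p" "odd n'" using less.prems(2) n' by auto
    from less.hyps[OF lt n'1 oddp(2)] obtain c d where cd: "n' dvd c^2 + d^2 + 1" by blast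
    show ?thesis
    proof (cases "p dvd n'")
      case False
      then have cop: "coprime p n'" using p prime_imp_coprime_int by blast
      obtain c1 d1 where cd1: "p dvd c1^2 + d1^2 + 1" using prime_two_sq[OF p oddp(1)] by blast
      obtain C where C: "[C = c1] (mod p)" "[C = c] (mod n')" using binary_chinese_remainder_int[OF cop] by blast
      obtain D where D: "[D = d1] (mod p)" "[D = d] (mod n')" using binary_chinese_remainder_int[OF cop] by blast
      have "[C^2 + D^2 + 1 = c1^2 + d1^2 + 1] (mod p)" 
        using cong_add[OF cong_add[OF cong_pow[OF C(1)] cong_pow[OF D(1)]] cong_refl[of 1]] by simp
      then have h1: "p dvd C^2 + D^2 + 1" using cd1 by (simp add: cong_dvd_iff)
      have "[C^2 + D^2 + 1 = c^2 + d^2 + 1] (mod n')" 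
        using cong_add[OF cong_add[OF cong_pow[OF C(2)] cong_pow[OF D(2)]] cong_refl[of 1]] by simp
      then have h2: "n' dvd C^2 + D^2 + 1" using cd by (simp add: cong_dvd_iff)
      have "p*n' dvd C^2 + D^2 + 1" using divides_mult[OF h1 h2 cop] .
      then show ?thesis using n' by blast
    next
      case True
      obtain q where q: "c^2 + d^2 + 1 = n'*q" using cd by (auto elim!: dvdE)
      have lift: "\<exists>c' . n dvd c'^2 + d^2 + 1" if nc: "\<not> p dvd c" and q: "c^2 + d^2 + 1 = n'*q" for c d
      proof -
        have "\<not> p dvd 2"
        proof
          assume "p dvd 2"
          then have "p \<le> 2" by (simp add: zdvd_imp_le)
          then have "p = 2" using p0 by simp
          then show False using oddp(1) by simp
        qed
        then have "\<not> p dvd 2*c" using nc p prime_dvd_mult_int by blast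
        then have "coprime (2*c) p" using p prime_imp_coprime_int coprime_commute by blast
        then obtain w where w: "[2*c*w = 1] (mod p)" using cong_solve_coprime_int by blast
        define u where "u = -q*w"
        have e: "(c + n'*u)^2 + d^2 + 1 = n'*(q*(1 - 2*c*w) + n'*u^2)"
          unfolding u_def using q by (simp add: power2_eq_square algebra_simps)
        have "p dvd 1 - 2*c*w" using w by (simp add: cong_iff_dvd_diff dvd_diff_commute)
        then have "p dvd q*(1 - 2*c*w) + n'*u^2" using True by simp
        then have "p*n' dvd (c + n'*u)^2 + d^2 + 1" unfolding e by (simp add: mult.commute mult_dvd_mono)
        then show ?thesis using n' by blast
      qed
      have "\<not> p dvd c \<or> \<not> p dvd d"
      proof (rule ccontr)
        assume "\<not> ?thesis"
        then have "p dvd c^2 + d^2" by (auto simp: power2_eq_square intro!: dvd_add dvd_mult2)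
        moreover have "p dvd c^2 + d^2 + 1" using True cd dvd_trans by blast
        ultimately have "p dvd 1" by (metis dvd_add_right_iff)
        then show False using p0 by (simp add: zdvd_imp_le)
      qed
      then show ?thesis
      proof
        assume "\<not> p dvd c" then show ?thesis using lift[of c d] q by blast
      next
        assume "\<not> p dvd d" then obtain d' where "n dvd d'^2 + c^2 + 1" using lift[of d c] q
          by (auto simp: algebra_simps)
        then show ?thesis by (auto simp: algebra_simps)
      qed
    qed
  qed
qed
lemma odd_all:
  fixes n r :: int
  assumes "n \<ge> 1" "odd n"
  shows "sum3sq_mod n r"
proof -
  obtain c d where cd: "n dvd c^2 + d^2 + 1" using odd_two_sq assms by blast
  have "coprime 2 n" using assms(2) by (simp add: coprime_commute)
  then obtain h where h: "[2*h = 1] (mod n)" using cong_solve_coprime_int by blast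
  then have h1: "n dvd 2*h - 1" by (simp add: cong_iff_dvd_diff)
  define u where "u = (r+1)*h"
  define v where "v = (r-1)*h"
  have e: "u^2 + (c*v)^2 + (d*v)^2 - r = r*(2*h-1)*(2*h+1) + v^2*(c^2+d^2+1)"
    unfolding u_def v_def by (simp add: power2_eq_square algebra_simps)
  have "n dvd r*(2*h-1)*(2*h+1) + v^2*(c^2+d^2+1)"
    using h1 cd by (intro dvd_add) (auto intro: dvd_mult dvd_mult2)
  then have "[u^2 + (c*v)^2 + (d*v)^2 = r] (mod n)" unfolding cong_iff_dvd_diff e .
  then show ?thesis unfolding sum3sq_mod_def by blast
qed

lemma sum3_crt:
  fixes M1 M2 r :: int
  assumes cop: "coprime M1 M2" and s1: "sum3sq_mod M1 r" and s2: "sum3sq_mod M2 r"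
  shows "sum3sq_mod (M1*M2) r"
proof -
  obtain x1 y1 z1 where 1: "[x1^2+y1^2+z1^2 = r] (mod M1)" using s1 unfolding sum3sq_mod_def by blast
  obtain x2 y2 z2 where 2: "[x2^2+y2^2+z2^2 = r] (mod M2)" using s2 unfolding sum3sq_mod_def by blast
  obtain X where X: "[X = x1] (mod M1)" "[X = x2] (mod M2)" using binary_chinese_remainder_int[OF cop] by blast
  obtain Y where Y: "[Y = y1] (mod M1)" "[Y = y2] (mod M2)" using binary_chinese_remainder_int[OF cop] by blast
  obtain Z where Z: "[Z = z1] (mod M1)" "[Z = z2] (mod M2)" using binary_chinese_remainder_int[OF cop] by blast
  have "[X^2+Y^2+Z^2 = x1^2+y1^2+z1^2] (mod M1)"
    using cong_add[OF cong_add[OF cong_pow[OF X(1)] cong_pow[OF Y(1)]] cong_pow[OF Z(1)]] by simp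
  then have "[X^2+Y^2+Z^2 = r] (mod M1)" using 1 by (rule cong_trans)
  then have a: "M1 dvd X^2+Y^2+Z^2 - r" by (simp add: cong_iff_dvd_diff)
  have "[X^2+Y^2+Z^2 = x2^2+y2^2+z2^2] (mod M2)"
    using cong_add[OF cong_add[OF cong_pow[OF X(2)] cong_pow[OF Y(2)]] cong_pow[OF Z(2)]] by simp
  then have "[X^2+Y^2+Z^2 = r] (mod M2)" using 2 by (rule cong_trans)
  then have b: "M2 dvd X^2+Y^2+Z^2 - r" by (simp add: cong_iff_dvd_diff)
  have "M1*M2 dvd X^2+Y^2+Z^2 - r" using divides_mult[OF a b cop] .
  then show ?thesis unfolding sum3sq_mod_def cong_iff_dvd_diff by blast
qed

lemma sqf_sum3:
  fixes m s :: int
  assumes m: "m > 0" and sf: "squarefree s" and s7: "s mod 8 \<noteq> 7"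
  shows "sum3sq_mod m s"
proof -
  obtain e q where mq: "m = 2^e*q" and q: "odd q" using decomp2[OF m] by auto
  have q1: "q \<ge> 1" using m mq q by (smt (verit) zero_less_mult_iff zero_less_power odd_pos)
  have "\<not> (2::int)^2 dvd s" using sf squarefreeD[of s 2] by auto
  then have s4: "s mod 4 \<noteq> 0" by auto
  have "coprime ((2::int)^e) q" using q by simp
  from sum3_crt[OF this sum3_pow2[OF s4 s7] odd_all[OF q1 q]] show ?thesis using mq by simp
qed

lemma arith_main:
  fixes m a :: int
  assumes m: "m > 0" and a: "0 \<le> a" "a < m" and S: "sum3sq_mod m a"
  shows "\<exists>k s. 1 \<le> k \<and> k < 4*m \<and> squarefree s \<and> 1 \<le> s \<and> s \<le> 5*m \<and> sum3sq_mod m s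
           \<and> [k^2*s = a] (mod m)"
proof -
  obtain N where N: "N \<ge> 1" "N < 4*m" "[N = a] (mod m)" "\<forall>i l. N \<noteq> 4^i*(8*l+7)"
    using good_exists[OF assms] by blast
  define s where "s = squarefree_part N"
  define k where "k = square_part N"
  have Nsk: "N = s * k^2" unfolding s_def k_def by (rule squarefree_decompose)
  have "k \<noteq> 0" unfolding k_def using N(1) by simp
  moreover have "k \<ge> 0" unfolding k_def by (metis abs_ge_zero normalize_square_part normalize_int_def)
  ultimately have k1: "k \<ge> 1" by simp
  have k2: "k \<le> k^2" using k1 by (simp add: power2_eq_square)
  have "0 < s * k^2" using Nsk N(1) by simp
  then have s1: "s \<ge> 1" using k1 by (simp add: zero_less_mult_iff)
  have "1 * s \<le> k^2 * s" using k1 s1 k2 by (intro mult_right_mono) auto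
  then have sN: "s \<le> N" using Nsk by (simp add: mult.commute)
  have "k^2 * 1 \<le> k^2 * s" using s1 by (intro mult_left_mono) auto
  then have kN: "k \<le> N" using Nsk k2 by (simp add: mult.commute)
  have sf: "squarefree s" unfolding s_def by simp
  have s7: "s mod 8 \<noteq> 7"
  proof
    assume "s mod 8 = 7"
    from bad_sqf[OF this k1] obtain i l where "k^2*s = 4^i*(8*l+7)" by blast
    then have "N = 4^i*(8*l+7)" using Nsk by (simp add: mult.commute)
    then show False using N(4) by blast
  qed
  have "[k^2*s = a] (mod m)" using N(3) Nsk by (simp add: mult.commute)
  then show ?thesis using k1 kN sN N sf s1 sqf_sum3[OF m sf s7] by (intro exI[of _ k] exI[of _ s]) auto
qed


lemma r3_finite: "finite {p :: int \<times> int \<times> int. (fst p)^2 + (fst (snd p))^2 + (snd (snd p))^2 = int n}"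
proof -
  have b: "\<bar>x\<bar> \<le> int n" if "x^2 + y^2 + z^2 = int n" for x y z :: int
  proof -
    have "\<bar>x\<bar> \<le> x^2"
    proof (cases "x = 0")
      case False
      then have "\<bar>x\<bar> * 1 \<le> \<bar>x\<bar> * \<bar>x\<bar>" by (intro mult_left_mono) auto
      then show ?thesis by (simp add: power2_eq_square abs_mult_self_eq)
    qed simp
    moreover have "0 \<le> y^2" "0 \<le> z^2" by auto
    ultimately show ?thesis using that by linarith
  qed
  let ?I = "{-int n..int n}"
  have "{p :: int \<times> int \<times> int. (fst p)^2 + (fst (snd p))^2 + (snd (snd p))^2 = int n} \<subseteq> ?I \<times> ?I \<times> ?I"
  proof (rule subsetI)
    fix p :: "int \<times> int \<times> int"
    assume "p \<in> {p :: int \<times> int \<times> int. (fst p)^2 + (fst (snd p))^2 + (snd (snd p))^2 = int n}"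
    moreover obtain x y z where p: "p = (x,y,z)" by (cases p) auto
    ultimately have h: "x^2 + y^2 + z^2 = int n" by simp
    have "\<bar>x\<bar> \<le> int n" using b[OF h] .
    moreover have "\<bar>y\<bar> \<le> int n" using b[of y x z] h by (simp add: algebra_simps)
    moreover have "\<bar>z\<bar> \<le> int n" using b[of z x y] h by (simp add: algebra_simps)
    ultimately show "p \<in> ?I \<times> ?I \<times> ?I" using p by auto
  qed
  then show ?thesis by (rule finite_subset) auto
qed

lemma r3_mono:
  fixes K :: nat
  assumes "K \<ge> 1"
  shows "r3 n \<le> r3 (K^2 * n)"
proof -
  define f where "f = (\<lambda>p :: int \<times> int \<times> int. (int K * fst p, int K * fst (snd p), int K * snd (snd p)))"
  have "inj_on f UNIV" unfolding f_def using assms by (auto intro!: inj_onI)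
  moreover have "f ` {p :: int \<times> int \<times> int. (fst p)^2 + (fst (snd p))^2 + (snd (snd p))^2 = int n}
      \<subseteq> {p :: int \<times> int \<times> int. (fst p)^2 + (fst (snd p))^2 + (snd (snd p))^2 = int (K^2*n)}"
  proof (rule subsetI)
    fix q assume "q \<in> f ` {p :: int \<times> int \<times> int. (fst p)^2 + (fst (snd p))^2 + (snd (snd p))^2 = int n}"
    then obtain p where q: "q = f p" and
      "p \<in> {p :: int \<times> int \<times> int. (fst p)^2 + (fst (snd p))^2 + (snd (snd p))^2 = int n}" by blast
    moreover obtain x y z where p: "p = (x,y,z)" by (cases p) auto
    ultimately have h: "x^2 + y^2 + z^2 = int n" by simp
    have "(int K * x)^2 + (int K * y)^2 + (int K * z)^2 = (int K)^2 * (x^2 + y^2 + z^2)"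
      by (simp add: power_mult_distrib algebra_simps)
    also have "\<dots> = int (K^2*n)" using h by simp
    finally show "q \<in> {p :: int \<times> int \<times> int. (fst p)^2 + (fst (snd p))^2 + (snd (snd p))^2 = int (K^2*n)}"
      unfolding q p f_def by simp
  qed
  ultimately show ?thesis unfolding r3_def
    by (intro card_inj_on_le[OF _ _ r3_finite]) (auto intro: inj_on_subset)
qed

lemma loglog_bound:
  fixes K :: real and x :: real
  assumes "K \<ge> 1" "x \<ge> K" "x \<ge> 9"
  shows "0 \<le> ln (ln (K*x))" "ln (ln (K*x)) \<le> 2 * ln (ln x)"
proof -
  have e2: "exp 2 \<le> (9::real)"
  proof -
    have "exp (2::real) = exp 1 * exp 1" by (simp flip: exp_add)
    also have "\<dots> \<le> 3 * 3" using exp_le by (intro mult_mono) auto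
    finally show ?thesis by simp
  qed
  have x0: "x > 0" using assms by simp
  have lx: "ln x \<ge> 2"
  proof -
    have "exp 2 \<le> x" using e2 assms by simp
    then show ?thesis using x0 by (simp add: exp_le_cancel_iff ln_ge_iff)
  qed
  have Kx: "K*x \<ge> x" using assms x0 by simp
  have lKx: "ln (K*x) \<ge> ln x" using Kx x0 by simp
  show "0 \<le> ln (ln (K*x))" using lKx lx by simp
  have "ln (K*x) \<le> ln (x*x)" using assms x0 by (intro ln_mono) (auto intro: mult_right_mono)
  also have "\<dots> = 2 * ln x" using x0 by (simp add: ln_mult)
  finally have "ln (ln (K*x)) \<le> ln (2 * ln x)" using lKx lx by (intro ln_mono) auto
  also have "\<dots> = ln 2 + ln (ln x)" using lx by (simp add: ln_mult)
  also have "\<dots> \<le> 2 * ln (ln x)" using lx by simp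
  finally show "ln (ln (K*x)) \<le> 2 * ln (ln x)" .
qed


lemma transfer_ml:
  fixes m a s k :: int and c :: real
  assumes m: "m > 0" and k: "1 \<le> k" "k < 4*m" and cg: "[k^2*s = a] (mod m)" and c: "c > 0"
    and hML: "many_large m s c"
  shows "many_large m a (c / (8*m))"
proof -
  define kn where "kn = nat k"
  have kn: "int kn = k" "kn \<ge> 1" using k unfolding kn_def by auto
  define K where "K = kn^2"
  have K1: "K \<ge> 1" unfolding K_def using kn by simp
  define B where "B = max K 9"
  define S' where "S' = {n :: nat. n > 0 \<and> [int n = s] (mod m) \<and>
                 real (r3 n) \<ge> c * sqrt (real n) * ln (ln (real n))}"
  define S where "S = {n :: nat. n > 0 \<and> [int n = a] (mod m) \<and>
                 real (r3 n) \<ge> c / (8*m) * sqrt (real n) * ln (ln (real n))}"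
  define T where "T = S' - {..<B}"
  have infS': "infinite S'" using hML unfolding many_large_def S'_def by simp
  have infT: "infinite T" unfolding T_def using infS' by (metis finite_Diff2 finite_lessThan)
  have inj: "inj_on (\<lambda>n. K*n) T" using K1 by (auto intro!: inj_onI)
  have sub: "(\<lambda>n. K*n) ` T \<subseteq> S"
  proof (rule image_subsetI)
    fix n assume "n \<in> T"
    then have n: "n > 0" "[int n = s] (mod m)" "real (r3 n) \<ge> c * sqrt (real n) * ln (ln (real n))"
      and nB: "n \<ge> B" unfolding T_def S'_def by auto
    have "K*n > 0" using n K1 by simp
    moreover have "[int (K*n) = a] (mod m)"
    proof -
      have "[k^2 * int n = k^2 * s] (mod m)" using n(2) by (intro cong_mult cong_refl)
      then have "[int (K*n) = k^2*s] (mod m)" unfolding K_def using kn by simp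
      then show ?thesis using cg by (rule cong_trans)
    qed
    moreover have "real (r3 (K*n)) \<ge> c / (8*m) * sqrt (real (K*n)) * ln (ln (real (K*n)))"
    proof -
      have xK: "real n \<ge> real K" "real n \<ge> 9" "real K \<ge> 1" using nB K1 unfolding B_def by auto
      note LL = loglog_bound[OF xK(3) xK(1) xK(2)]
      have sq: "sqrt (real (K*n)) = real kn * sqrt (real n)" unfolding K_def
        by (simp add: real_sqrt_mult)
      have kle: "real kn \<le> 4 * m" using kn k by linarith
      have m0: "real_of_int m > 0" using m by simp
      have "c / (8*m) * sqrt (real (K*n)) * ln (ln (real (K*n)))
           = (c / (8*m) * real kn) * (sqrt (real n) * ln (ln (real K * real n)))"
        using sq by simp
      also have "\<dots> \<le> (c/2) * (sqrt (real n) * ln (ln (real K * real n)))"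
      proof (rule mult_right_mono)
        have "c / (8*m) * real kn \<le> c / (8*m) * (4*m)" using kle c m0 by (intro mult_left_mono) auto
        also have "\<dots> = c/2" using m0 by (simp add: field_simps)
        finally show "c / (8*m) * real kn \<le> c/2" .
        show "0 \<le> sqrt (real n) * ln (ln (real K * real n))" using LL(1) by (simp add: mult.commute)
      qed
      also have "\<dots> \<le> (c/2) * (sqrt (real n) * (2 * ln (ln (real n))))"
        using LL(2) c by (intro mult_left_mono) (auto simp: mult.commute)
      also have "\<dots> = c * sqrt (real n) * ln (ln (real n))" by simp
      also have "\<dots> \<le> real (r3 n)" using n(3) .
      also have "\<dots> \<le> real (r3 (K*n))" unfolding K_def using r3_mono[of kn n] kn by simp
      finally show ?thesis .
    qed
    ultimately show "K*n \<in> S" unfolding S_def by blast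
  qed
  have "infinite S"
  proof
    assume "finite S"
    then have "finite ((\<lambda>n. K*n) ` T)" using sub finite_subset by blast
    then have "finite T" using finite_image_iff[OF inj] by blast
    then show False using infT by blast
  qed
  then show ?thesis unfolding many_large_def S_def by simp
qed

theorem lemma3p1:
  fixes m :: int
  assumes "m > 0"
  shows "\<exists>C :: real \<Rightarrow> real. (\<forall>c > 0. C c > 0) \<and>
    (\<forall>a. 0 \<le> a \<and> a < m \<and> sum3sq_mod m a \<longrightarrow>
      (\<exists>a'. squarefree a' \<and> 1 \<le> a' \<and> a' \<le> 5 * m \<and> sum3sq_mod m a' \<and>
        (\<forall>c > 0. many_large m a' c \<longrightarrow> many_large m a (C c))))"
proof -
  define C where "C = (\<lambda>c::real. c / (8 * real_of_int m))"
  have 1: "\<forall>c > 0. C c > 0" unfolding C_def using assms by simp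
  have 2: "\<exists>a'. squarefree a' \<and> 1 \<le> a' \<and> a' \<le> 5 * m \<and> sum3sq_mod m a' \<and>
        (\<forall>c > 0. many_large m a' c \<longrightarrow> many_large m a (C c))"
    if a: "0 \<le> a \<and> a < m \<and> sum3sq_mod m a" for a
  proof -
    from a have a1: "0 \<le> a" "a < m" "sum3sq_mod m a" by auto
    obtain k s where ks: "1 \<le> k" "k < 4*m" "squarefree s" "1 \<le> s" "s \<le> 5*m" "sum3sq_mod m s"
      "[k^2*s = a] (mod m)" using arith_main[OF assms a1] by blast
    have "\<forall>c > 0. many_large m s c \<longrightarrow> many_large m a (C c)"
    proof (intro allI impI)
      fix c :: real assume "c > 0" "many_large m s c"
      from transfer_ml[OF assms ks(1) ks(2) ks(7) this] show "many_large m a (C c)"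
        unfolding C_def by simp
    qed
    with ks(3-6) show ?thesis by blast
  qed
  from 1 2 show ?thesis by blast
qed

end
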